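(* Let $X$ be a real Hilbert space, $n\in\{3,4,\ldots\}$, $U_1,\ldots,U_n$ closed linear subspaces of $X$, $P_i:=P_{U_i}$, $Z:=U_1\cap\cdots\cap U_n$. Define $M\colon X^{n-1}\to X^n$ by $M(z_1,\ldots,z_{n-1})=(x_1,\ldots,x_n)$ with $x_1=P_1z_1$, $x_i=P_i(x_{i-1}+z_i-z_{i-1})$ for $2\le i\le n-1$, $x_n=P_n(x_1+x_{n-1}-z_{n-1})$, and define $T\colon X^{n-1}\to X^{n-1}$ by $T\mathbf z=\mathbf z+\big((Q_2-Q_1)M\mathbf z,\ldots,(Q_n-Q_{n-1})M\mathbf z\big)$, where $Q_i\colon X^n\to X$ is the $i$-th coordinate map. Let \[ \Psi\colon U_1^\perp\times\cdots\times U_{n-1}^\perp\to X^{n-1},\quad (y_1,\ldots,y_{n-1})\mapsto(y_1,\,y_1+y_2,\,\ldots,\,y_1+\cdots+y_{n-1}). \] Then $\Psi$ is a continuous linear operator with closed range, and \[ \operatorname{Fix}T=\{(z,\ldots,z)\in X^{n-1}: z\in Z\}\oplus E, \] where \[ E:=\operatorname{ran}\Psi\cap(X^{n-2}\times U_n^\perp)\subseteq U_1^\perp\times(U_1^\perp+U_2^\perp)\times\cdots\times(U_1^\perp+\cdots+U_{n-2}^\perp)\times\big((U_1^\perp+\cdots+U_{n-1}^\perp)\cap U_n^\perp\big). \] Moreover, for $\mathbf z=(z_1,\ldots,z_{n-1})\in X^{n-1}$ and $\bar z=(z_1+\cdots+z_{n-1})/(n-1)$, \[ P_{\operatorname{Fix}T}\mathbf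 z=(P_Z\bar z,\ldots,P_Z\bar z)\oplus P_E\mathbf z, \] and hence $P_1\big(Q_1P_{\operatorname{Fix}T}\mathbf z\big)=P_Z\bar z$, where here $Q_1$ denotes the first-coordinate map on $X^{n-1}$.
   Context: $P_S$ denotes the orthogonal projection onto a closed linear subspace (or closed convex set) $S$; $\oplus$ denotes a sum of mutually orthogonal vectors or subspaces; $\operatorname{ran}$ denotes range. *)

theory Defs
  imports "HOL-Analysis.Analysis"
begin

text \<open>Tuples in X^k are represented as functions nat => X with indices 1..k
  (all other entries zero).\<close>

definition tup :: "nat \<Rightarrow> (nat \<Rightarrow> 'a::zero) set" where
  "tup k = {z. \<forall>i. (i < 1 \<or> k < i) \<longrightarrow> z i = 0}"

definition tinner :: "nat \<Rightarrow> (nat \<Rightarrow> 'a::real_inner) \<Rightarrow> (nat \<Rightarrow> 'a) \<Rightarrow> real" where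
  "tinner k z w = (\<Sum>i\<in>{1..k}. inner (z i) (w i))"

definition tnorm :: "nat \<Rightarrow> (nat \<Rightarrow> 'a::real_inner) \<Rightarrow> real" where
  "tnorm k z = sqrt (tinner k z z)"

definition tdiff :: "(nat \<Rightarrow> 'a::ab_group_add) \<Rightarrow> (nat \<Rightarrow> 'a) \<Rightarrow> nat \<Rightarrow> 'a" where
  "tdiff z w = (\<lambda>i. z i - w i)"

definition proj :: "'a::real_inner set \<Rightarrow> 'a \<Rightarrow> 'a" where
  "proj S x = (SOME p. p \<in> S \<and> (\<forall>q\<in>S. norm (x - p) \<le> norm (x - q)))"

definition tproj :: "nat \<Rightarrow> (nat \<Rightarrow> 'a::real_inner) set \<Rightarrow> (nat \<Rightarrow> 'a) \<Rightarrow> nat \<Rightarrow> 'a" where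
  "tproj k S z = (SOME p. p \<in> S \<and> (\<forall>q\<in>S. tnorm k (tdiff z p) \<le> tnorm k (tdiff z q)))"

definition perp :: "'a::real_inner set \<Rightarrow> 'a set" where
  "perp U = {y. \<forall>u\<in>U. inner u y = 0}"

definition closed_subspace :: "'a::real_normed_vector set \<Rightarrow> bool" where
  "closed_subspace U \<longleftrightarrow> subspace U \<and> closed U"

definition perpsum :: "(nat \<Rightarrow> 'a::real_inner set) \<Rightarrow> nat \<Rightarrow> 'a set" where
  "perpsum U i = {(\<Sum>j\<in>{1..i}. y j) | y. \<forall>j\<in>{1..i}. y j \<in> perp (U j)}"

fun mx :: "(nat \<Rightarrow> 'a \<Rightarrow> 'a) \<Rightarrow> (nat \<Rightarrow> 'a::ab_group_add) \<Rightarrow> nat \<Rightarrow> 'a" where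
  "mx P z 0 = 0"
| "mx P z (Suc 0) = P 1 (z 1)"
| "mx P z (Suc (Suc k)) = P (k + 2) (mx P z (Suc k) + z (k + 2) - z (k + 1))"

definition Mop :: "nat \<Rightarrow> (nat \<Rightarrow> 'a::real_inner set) \<Rightarrow> (nat \<Rightarrow> 'a) \<Rightarrow> nat \<Rightarrow> 'a" where
  "Mop n U z i =
     (if 1 \<le> i \<and> i \<le> n - 1 then mx (\<lambda>j. proj (U j)) z i
      else if i = n then proj (U n) (mx (\<lambda>j. proj (U j)) z 1 + mx (\<lambda>j. proj (U j)) z (n - 1) - z (n - 1))
      else 0)"

definition Top :: "nat \<Rightarrow> (nat \<Rightarrow> 'a::real_inner set) \<Rightarrow> (nat \<Rightarrow> 'a) \<Rightarrow> nat \<Rightarrow> 'a" where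
  "Top n U z i = (if 1 \<le> i \<and> i \<le> n - 1 then z i + (Mop n U z (i + 1) - Mop n U z i) else 0)"

definition FixT :: "nat \<Rightarrow> (nat \<Rightarrow> 'a::real_inner set) \<Rightarrow> (nat \<Rightarrow> 'a) set" where
  "FixT n U = {z \<in> tup (n - 1). Top n U z = z}"

definition PsiDom :: "nat \<Rightarrow> (nat \<Rightarrow> 'a::real_inner set) \<Rightarrow> (nat \<Rightarrow> 'a) set" where
  "PsiDom n U = {y \<in> tup (n - 1). \<forall>i\<in>{1..n - 1}. y i \<in> perp (U i)}"

definition Psi :: "nat \<Rightarrow> (nat \<Rightarrow> 'a::real_inner) \<Rightarrow> nat \<Rightarrow> 'a" where
  "Psi n y i = (if 1 \<le> i \<and> i \<le> n - 1 then (\<Sum>j\<in>{1..i}. y j) else 0)"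

definition Eset :: "nat \<Rightarrow> (nat \<Rightarrow> 'a::real_inner set) \<Rightarrow> (nat \<Rightarrow> 'a) set" where
  "Eset n U = {w \<in> Psi n ` PsiDom n U. w (n - 1) \<in> perp (U n)}"

definition diag :: "nat \<Rightarrow> 'a::zero set \<Rightarrow> (nat \<Rightarrow> 'a) set" where
  "diag k Z = {d. \<exists>x\<in>Z. d = (\<lambda>i. if 1 \<le> i \<and> i \<le> k then x else 0)}"

definition tlinear_on :: "nat \<Rightarrow> (nat \<Rightarrow> 'a::real_vector) set \<Rightarrow> ((nat \<Rightarrow> 'a) \<Rightarrow> nat \<Rightarrow> 'a) \<Rightarrow> bool" where
  "tlinear_on k D f \<longleftrightarrow>
     (\<forall>y\<in>D. \<forall>y'\<in>D. \<forall>a b. (\<lambda>i. a *\<^sub>R y i + b *\<^sub>R y' i) \<in> D \<and>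
        f (\<lambda>i. a *\<^sub>R y i + b *\<^sub>R y' i) = (\<lambda>i. a *\<^sub>R f y i + b *\<^sub>R f y' i))"

definition tcontinuous_on :: "nat \<Rightarrow> (nat \<Rightarrow> 'a::real_inner) set \<Rightarrow> ((nat \<Rightarrow> 'a) \<Rightarrow> nat \<Rightarrow> 'a) \<Rightarrow> bool" where
  "tcontinuous_on k D f \<longleftrightarrow>
     (\<forall>y\<in>D. \<forall>e>0. \<exists>d>0. \<forall>y'\<in>D. tnorm k (tdiff y' y) < d \<longrightarrow> tnorm k (tdiff (f y') (f y)) < e)"

definition tclosed :: "nat \<Rightarrow> (nat \<Rightarrow> 'a::real_inner) set \<Rightarrow> bool" where
  "tclosed k S \<longleftrightarrow> S \<subseteq> tup k \<and>
     (\<forall>s z. (\<forall>m. s m \<in> S) \<and> z \<in> tup k \<and> (\<lambda>m. tnorm k (tdiff (s m) z)) \<longlonglongrightarrow> 0 \<longrightarrow> z \<in> S)"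

end

theory Submission
  imports Defs
begin


lemma tinner_self: "tinner k z z = (\<Sum>i\<in>{1..k}. (norm (z i))^2)"
  by (simp add: tinner_def power2_norm_eq_inner)

lemma tinner_self_ge0: "tinner k z z \<ge> 0"
  by (simp add: tinner_self sum_nonneg)

lemma tinner_commute: "tinner k z w = tinner k w z"
  by (simp add: tinner_def inner_commute)

lemma sq_norm_le_tinner: "i \<in> {1..k} \<Longrightarrow> (norm (z i))^2 \<le> tinner k z z"
  unfolding tinner_self by (rule member_le_sum) auto

lemma norm_le_tnorm: "i \<in> {1..k} \<Longrightarrow> norm (z i) \<le> tnorm k z"
  unfolding tnorm_def by (rule real_le_rsqrt) (rule sq_norm_le_tinner)

lemma tinner_zero_imp: "tinner k z z = 0 \<Longrightarrow> i \<in> {1..k} \<Longrightarrow> z i = 0"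
  using sq_norm_le_tinner[of i k z] by simp

lemma tup_eqI: assumes "p \<in> tup k" "q \<in> tup k" "\<And>i. i \<in> {1..k} \<Longrightarrow> p i = q i" shows "p = q"
proof (rule ext)
  fix i show "p i = q i"
  proof (cases "1 \<le> i \<and> i \<le> k")
    case True then show ?thesis by (simp add: assms)
  next
    case False then have "i < 1 \<or> k < i" by auto
    then show ?thesis using assms(1,2) unfolding tup_def by auto
  qed
qed


lemma para0:
  fixes u v :: "'a::real_inner"
  shows "(norm (v - u))^2 + (norm (u + v))^2 = 2*(norm u)^2 + 2*(norm v)^2"
  unfolding power2_norm_eq_inner
  by (simp add: inner_diff_left inner_diff_right inner_add_left inner_add_right inner_commute)

lemma para_X:
  fixes a b z :: "'a::real_inner"
  shows "(norm (a - b))^2 = 2*(norm (z - a))^2 + 2*(norm (z - b))^2 - 4*(norm (z - (1/2) *\<^sub>R (a + b)))^2"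
proof -
  have e1: "a - b = (z - b) - (z - a)" by simp
  have zz: "(1/2) *\<^sub>R z + (1/2) *\<^sub>R z = z"
    by (metis field_sum_of_halves scaleR_add_left scaleR_one)
  have e2: "z - (1/2) *\<^sub>R (a + b) = (1/2) *\<^sub>R ((z - a) + (z - b))"
    using zz by (simp add: algebra_simps)
  have "(norm (z - (1/2) *\<^sub>R (a + b)))^2 = (1/4) * (norm ((z - a) + (z - b)))^2"
    unfolding e2 by (simp add: power2_eq_square)
  then show ?thesis using para0[of "z - b" "z - a"] unfolding e1 by simp
qed

lemma coord_tendsto:
  fixes s :: "nat \<Rightarrow> nat \<Rightarrow> 'a::real_inner"
  assumes "(\<lambda>m. tnorm k (tdiff (s m) z)) \<longlonglongrightarrow> 0" "i \<in> {1..k}"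
  shows "(\<lambda>m. s m i) \<longlonglongrightarrow> z i"
proof -
  have le: "norm (norm (s m i - z i)) \<le> tnorm k (tdiff (s m) z)" for m
    using norm_le_tnorm[OF assms(2), of "tdiff (s m) z"] unfolding tdiff_def by simp
  have "(\<lambda>m. s m i - z i) \<longlonglongrightarrow> 0"
    by (rule tendsto_norm_zero_cancel, rule Lim_null_comparison[OF _ assms(1)]) (use le in auto)
  then show ?thesis by (simp add: LIM_zero_iff)
qed

lemma tnorm_tendsto:
  fixes s :: "nat \<Rightarrow> nat \<Rightarrow> 'a::real_inner"
  assumes "\<And>i. i \<in> {1..k} \<Longrightarrow> (\<lambda>m. s m i) \<longlonglongrightarrow> z i"
  shows "(\<lambda>m. tnorm k (tdiff (s m) z)) \<longlonglongrightarrow> 0"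
proof -
  have "(\<lambda>m. sqrt (\<Sum>i\<in>{1..k}. inner (s m i - z i) (s m i - z i))) \<longlonglongrightarrow> sqrt (\<Sum>i\<in>{1..k}. inner (z i - z i) (z i - z i))"
    by (intro tendsto_intros assms)
  then show ?thesis by (simp add: tnorm_def tinner_def tdiff_def)
qed



lemma tnearest_exists:
  fixes C :: "(nat \<Rightarrow> 'a::{real_inner,complete_space}) set"
  assumes sub: "C \<subseteq> tup k" and ne: "C \<noteq> {}"
    and mid: "\<And>a b. a \<in> C \<Longrightarrow> b \<in> C \<Longrightarrow> (\<lambda>i. (1/2) *\<^sub>R (a i + b i)) \<in> C"
    and cl: "tclosed k C"
  shows "\<exists>p\<in>C. \<forall>q\<in>C. tnorm k (tdiff z p) \<le> tnorm k (tdiff z q)"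
proof -
  define f where "f q = tinner k (tdiff z q) (tdiff z q)" for q
  define \<delta> where "\<delta> = Inf (f ` C)"
  have bdd: "bdd_below (f ` C)" by (rule bdd_belowI[of _ 0]) (auto simp: f_def tinner_self_ge0)
  have low: "\<delta> \<le> f q" if "q \<in> C" for q unfolding \<delta>_def using bdd that by (simp add: cInf_lower)
  have "\<exists>q\<in>C. f q < \<delta> + inverse (real (Suc m))" for m
  proof -
    have "Inf (f ` C) < \<delta> + inverse (real (Suc m))" by (simp add: \<delta>_def)
    then show ?thesis using ne bdd by (subst (asm) cInf_less_iff) auto
  qed
  then obtain s where s: "\<And>m. s m \<in> C" "\<And>m. f (s m) < \<delta> + inverse (real (Suc m))" by metis
  have cauchy_t: "tinner k (tdiff (s m) (s l)) (tdiff (s m) (s l)) \<le> 2 * inverse (real (Suc m)) + 2 * inverse (real (Suc l))" for m l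
  proof -
    let ?c = "\<lambda>i. (1/2) *\<^sub>R (s m i + s l i)"
    have "?c \<in> C" by (rule mid) (rule s)+
    hence c: "\<delta> \<le> f ?c" by (rule low)
    have "(\<Sum>i\<in>{1..k}. (norm (s m i - s l i))^2) = (\<Sum>i\<in>{1..k}. 2*(norm (z i - s m i))^2 + 2*(norm (z i - s l i))^2 - 4*(norm (z i - (1/2) *\<^sub>R (s m i + s l i)))^2)"
      by (rule sum.cong[OF refl]) (rule para_X)
    then have eq: "tinner k (tdiff (s m) (s l)) (tdiff (s m) (s l)) = 2 * f (s m) + 2 * f (s l) - 4 * f ?c"
      by (simp add: f_def tinner_self tdiff_def sum_subtractf sum.distrib sum_distrib_left)
    show ?thesis using s(2)[of m] s(2)[of l] c unfolding eq by linarith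
  qed
  have conv: "convergent (\<lambda>m. s m i)" if i: "i \<in> {1..k}" for i
  proof -
    have "Cauchy (\<lambda>m. s m i)"
    proof (rule metric_CauchyI)
      fix e :: real assume e: "e > 0"
      obtain N :: nat where N: "4 / (e^2) < real N" using reals_Archimedean2 by blast
      show "\<exists>M. \<forall>m\<ge>M. \<forall>n\<ge>M. dist (s m i) (s n i) < e"
      proof (intro exI allI impI)
        fix m l assume mN: "N \<le> m" and lN: "N \<le> l"
        have "(dist (s m i) (s l i))^2 \<le> tinner k (tdiff (s m) (s l)) (tdiff (s m) (s l))"
          using sq_norm_le_tinner[OF i, of "tdiff (s m) (s l)"] by (simp add: dist_norm tdiff_def)
        also have "\<dots> \<le> 2 * inverse (real (Suc m)) + 2 * inverse (real (Suc l))" by (rule cauchy_t)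
        also have "\<dots> \<le> 2 * inverse (real (Suc N)) + 2 * inverse (real (Suc N))"
          using mN lN by (intro add_mono mult_left_mono le_imp_inverse_le) auto
        also have "\<dots> < e^2"
        proof -
          have "4 < e^2 * real (Suc N)" using N e by (simp add: field_simps) (smt (verit) zero_le_power2)
          moreover have "2 * inverse (real (Suc N)) + 2 * inverse (real (Suc N)) = 4 / real (Suc N)"
            by (simp only: divide_inverse)
          moreover have "4 / real (Suc N) < e^2"
            using pos_divide_less_eq[of "real (Suc N)" 4 "e^2"] \<open>4 < e^2 * real (Suc N)\<close> by simp
          ultimately show ?thesis by simp
        qed
        finally show "dist (s m i) (s l i) < e"
          using e by (meson power2_less_imp_less less_imp_le)
      qed
    qed
    then show ?thesis by (simp add: Cauchy_convergent_iff)
  qed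
  define L where "L i = (if i \<in> {1..k} then lim (\<lambda>m. s m i) else 0)" for i
  have Lt: "(\<lambda>m. s m i) \<longlonglongrightarrow> L i" if "i \<in> {1..k}" for i
    using conv[OF that] that by (simp add: L_def convergent_LIMSEQ_iff)
  have Ltup: "L \<in> tup k" unfolding tup_def L_def by auto
  have "(\<lambda>m. tnorm k (tdiff (s m) L)) \<longlonglongrightarrow> 0" by (rule tnorm_tendsto) (rule Lt)
  then have LC: "L \<in> C" using cl s(1) Ltup unfolding tclosed_def by blast
  have fL: "(\<lambda>m. f (s m)) \<longlonglongrightarrow> f L"
    unfolding f_def tinner_def tdiff_def
  proof (rule tendsto_sum)
    fix i assume "i \<in> {1..k}"
    from Lt[OF this] show "(\<lambda>m. inner (z i - s m i) (z i - s m i)) \<longlonglongrightarrow> inner (z i - L i) (z i - L i)"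
      by (intro tendsto_intros)
  qed
  have up: "(\<lambda>m. \<delta> + inverse (real (Suc m))) \<longlonglongrightarrow> \<delta> + 0"
    by (rule tendsto_add[OF tendsto_const LIMSEQ_inverse_real_of_nat])
  have fd: "(\<lambda>m. f (s m)) \<longlonglongrightarrow> \<delta>"
  proof (rule tendsto_sandwich[of "\<lambda>m. \<delta>" _ _ "\<lambda>m. \<delta> + inverse (real (Suc m))"])
    show "\<forall>\<^sub>F m in sequentially. \<delta> \<le> f (s m)" using low s(1) by simp
    show "\<forall>\<^sub>F m in sequentially. f (s m) \<le> \<delta> + inverse (real (Suc m))"
      using s(2) less_imp_le by (simp add: less_imp_le)
    show "(\<lambda>m. \<delta>) \<longlonglongrightarrow> \<delta>" by simp
    show "(\<lambda>m. \<delta> + inverse (real (Suc m))) \<longlonglongrightarrow> \<delta>" using up by simp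
  qed
  have "f L = \<delta>" using LIMSEQ_unique[OF fL fd] .
  then have "\<forall>q\<in>C. tnorm k (tdiff z L) \<le> tnorm k (tdiff z q)"
    using low by (auto simp: tnorm_def f_def)
  then show ?thesis using LC by blast
qed



definition tsub :: "nat \<Rightarrow> (nat \<Rightarrow> 'a::real_vector) set \<Rightarrow> bool" where
  "tsub k C \<longleftrightarrow> C \<subseteq> tup k \<and> (\<lambda>_. 0) \<in> C \<and> (\<forall>y\<in>C. \<forall>y'\<in>C. \<forall>a b. (\<lambda>i. a *\<^sub>R y i + b *\<^sub>R y' i) \<in> C)"

lemma tsub_lin: "tsub k C \<Longrightarrow> y \<in> C \<Longrightarrow> y' \<in> C \<Longrightarrow> (\<lambda>i. a *\<^sub>R y i + b *\<^sub>R y' i) \<in> C"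
  unfolding tsub_def by blast

lemma tsub_diff: "tsub k C \<Longrightarrow> y \<in> C \<Longrightarrow> y' \<in> C \<Longrightarrow> tdiff y y' \<in> C"
  using tsub_lin[of k C y y' 1 "-1"] by (simp add: tdiff_def)

lemma tinner_sum_sq:
  "tinner k (\<lambda>i. u i + v i) (\<lambda>i. u i + v i) = tinner k u u + 2 * tinner k u v + tinner k v v"
proof -
  have "(\<Sum>i\<in>{1..k}. inner (u i + v i) (u i + v i)) = (\<Sum>i\<in>{1..k}. inner (u i) (u i) + 2 * inner (u i) (v i) + inner (v i) (v i))"
    by (rule sum.cong[OF refl]) (simp add: inner_add_left inner_add_right inner_commute)
  then show ?thesis by (simp add: tinner_def sum.distrib sum_distrib_left)
qed

lemma tinner_diff_sq:
  "tinner k (\<lambda>i. u i - t *\<^sub>R c i) (\<lambda>i. u i - t *\<^sub>R c i) = tinner k u u - 2 * t * tinner k u c + t^2 * tinner k c c"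
proof -
  have "(\<Sum>i\<in>{1..k}. inner (u i - t *\<^sub>R c i) (u i - t *\<^sub>R c i)) = (\<Sum>i\<in>{1..k}. inner (u i) (u i) - 2 * t * inner (u i) (c i) + t^2 * inner (c i) (c i))"
    by (rule sum.cong[OF refl]) (simp add: inner_diff_left inner_diff_right inner_commute power2_eq_square algebra_simps)
  then show ?thesis by (simp add: tinner_def sum.distrib sum_subtractf sum_distrib_left)
qed

lemma tpyth:
  assumes C: "tsub k C" and p: "p \<in> C" and orth: "\<forall>c\<in>C. tinner k (tdiff z p) c = 0" and q: "q \<in> C"
  shows "tinner k (tdiff z q) (tdiff z q) = tinner k (tdiff z p) (tdiff z p) + tinner k (tdiff p q) (tdiff p q)"
proof -
  have "tdiff z q = (\<lambda>i. tdiff z p i + tdiff p q i)" by (simp add: tdiff_def)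
  then have "tinner k (tdiff z q) (tdiff z q) = tinner k (tdiff z p) (tdiff z p) + 2 * tinner k (tdiff z p) (tdiff p q) + tinner k (tdiff p q) (tdiff p q)"
    by (simp add: tinner_sum_sq)
  moreover have "tinner k (tdiff z p) (tdiff p q) = 0" using orth tsub_diff[OF C p q] by blast
  ultimately show ?thesis by simp
qed

lemma tproj_unique:
  assumes C: "tsub k C" and p: "p \<in> C" and orth: "\<forall>c\<in>C. tinner k (tdiff z p) c = 0"
  shows "tproj k C z = p"
proof -
  have near: "tnorm k (tdiff z p) \<le> tnorm k (tdiff z q)" if "q \<in> C" for q
    using tpyth[OF C p orth that] tinner_self_ge0[of k "tdiff p q"] unfolding tnorm_def by simp
  define p' where "p' = tproj k C z"
  have "p' \<in> C \<and> (\<forall>q\<in>C. tnorm k (tdiff z p') \<le> tnorm k (tdiff z q))"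
    unfolding p'_def tproj_def by (rule someI[of _ p]) (use p near in blast)
  then have p'C: "p' \<in> C" and le: "tnorm k (tdiff z p') \<le> tnorm k (tdiff z p)" using p by auto
  have "tnorm k (tdiff z p') = tnorm k (tdiff z p)" using le near[OF p'C] by linarith
  then have "tinner k (tdiff z p') (tdiff z p') = tinner k (tdiff z p) (tdiff z p)"
    unfolding tnorm_def using tinner_self_ge0 by simp
  then have z: "tinner k (tdiff p p') (tdiff p p') = 0" using tpyth[OF C p orth p'C] by simp
  have "p = p'"
  proof (rule tup_eqI)
    show "p \<in> tup k" "p' \<in> tup k" using C p p'C unfolding tsub_def by auto
    fix i assume "i \<in> {1..k}"
    from tinner_zero_imp[OF z this] show "p i = p' i" by (simp add: tdiff_def)
  qed
  then show ?thesis by (simp add: p'_def)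
qed

lemma nearest_orth:
  fixes a b :: real
  assumes "\<And>t. 0 \<le> - 2 * t * a + t^2 * b" "b \<ge> 0"
  shows "a = 0"
proof -
  define t where "t = a / (b + 1)"
  have ta: "t * (b + 1) = a" using assms(2) by (simp add: t_def)
  have "(b+1)^2 * (- 2 * t * a + t^2 * b) = -2*a*(t*(b+1))*(b+1) + (t*(b+1))^2*b"
    by (simp add: algebra_simps power2_eq_square)
  also have "\<dots> = a^2 * (- b - 2)" unfolding ta by (simp add: algebra_simps power2_eq_square)
  finally have "(b+1)^2 * (- 2 * t * a + t^2 * b) = a^2 * (- b - 2)" .
  moreover have "0 \<le> (b+1)^2 * (- 2 * t * a + t^2 * b)" using assms(1)[of t] by simp
  ultimately have "0 \<le> a^2 * (- b - 2)" by simp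
  moreover have "a^2 * (- b - 2) = - (a^2 * (b + 2))" by (simp add: algebra_simps)
  ultimately have le: "a^2 * (b + 2) \<le> 0" by linarith
  show ?thesis
  proof (rule ccontr)
    assume "a \<noteq> 0"
    then have "a^2 > 0" by simp
    moreover have "b + 2 > 0" using assms(2) by simp
    ultimately have "a^2 * (b + 2) > 0" by (rule mult_pos_pos)
    with le show False by simp
  qed
qed

lemma tproj_char:
  fixes C :: "(nat \<Rightarrow> 'a::{real_inner,complete_space}) set"
  assumes C: "tsub k C" and cl: "tclosed k C"
  shows "tproj k C z \<in> C \<and> (\<forall>c\<in>C. tinner k (tdiff z (tproj k C z)) c = 0)"
proof -
  have mid: "(\<lambda>i. (1/2) *\<^sub>R (a i + b i)) \<in> C" if "a \<in> C" "b \<in> C" for a b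
    using tsub_lin[OF C that, of "1/2" "1/2"] by (simp add: scaleR_add_right)
  have "\<exists>p\<in>C. \<forall>q\<in>C. tnorm k (tdiff z p) \<le> tnorm k (tdiff z q)"
    by (rule tnearest_exists[OF _ _ mid cl]) (use C in \<open>auto simp: tsub_def\<close>)
  then have "tproj k C z \<in> C \<and> (\<forall>q\<in>C. tnorm k (tdiff z (tproj k C z)) \<le> tnorm k (tdiff z q))"
    unfolding tproj_def by (rule someI_ex[where P = "\<lambda>p. p \<in> C \<and> (\<forall>q\<in>C. tnorm k (tdiff z p) \<le> tnorm k (tdiff z q))", OF bexE]) blast+
  then obtain pC: "tproj k C z \<in> C" and near: "\<And>q. q \<in> C \<Longrightarrow> tnorm k (tdiff z (tproj k C z)) \<le> tnorm k (tdiff z q)"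
    by blast
  define p where "p = tproj k C z"
  have "tinner k (tdiff z p) c = 0" if c: "c \<in> C" for c
  proof (rule nearest_orth)
    show "0 \<le> tinner k c c" by (rule tinner_self_ge0)
    fix t :: real
    have "(\<lambda>i. 1 *\<^sub>R p i + t *\<^sub>R c i) \<in> C" using tsub_lin[OF C _ c] pC p_def by blast
    then have "tnorm k (tdiff z p) \<le> tnorm k (tdiff z (\<lambda>i. 1 *\<^sub>R p i + t *\<^sub>R c i))" using near p_def by blast
    moreover have "tdiff z (\<lambda>i. 1 *\<^sub>R p i + t *\<^sub>R c i) = (\<lambda>i. tdiff z p i - t *\<^sub>R c i)"
      by (simp add: tdiff_def algebra_simps)
    ultimately have "tinner k (tdiff z p) (tdiff z p) \<le> tinner k (\<lambda>i. tdiff z p i - t *\<^sub>R c i) (\<lambda>i. tdiff z p i - t *\<^sub>R c i)"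
      unfolding tnorm_def by simp
    then show "0 \<le> - 2 * t * tinner k (tdiff z p) c + t^2 * tinner k c c"
      unfolding tinner_diff_sq by simp
  qed
  then show ?thesis using pC p_def by blast
qed



lemma perp_iff: "y \<in> perp U \<longleftrightarrow> (\<forall>u\<in>U. inner u y = 0)"
  by (simp add: perp_def)

lemma subspace_perp: "subspace (perp U)"
  unfolding subspace_def perp_def by (auto simp: inner_add_right)

lemma closed_perp: "closed (perp (U :: 'a::real_inner set))"
proof -
  have "perp U = (\<Inter>u\<in>U. {y. inner u y = 0})" by (auto simp: perp_def)
  then show ?thesis by (auto intro!: closed_INT closed_hyperplane)
qed

lemma perp_add: "y \<in> perp U \<Longrightarrow> y' \<in> perp U \<Longrightarrow> y + y' \<in> perp U"
  by (rule subspace_add[OF subspace_perp])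

lemma perp_diff: "y \<in> perp U \<Longrightarrow> y' \<in> perp U \<Longrightarrow> y - y' \<in> perp U"
  by (rule subspace_diff[OF subspace_perp])

lemma perp_neg: "y \<in> perp U \<Longrightarrow> - y \<in> perp U"
  by (rule subspace_neg[OF subspace_perp])

lemma perp_scale: "y \<in> perp U \<Longrightarrow> c *\<^sub>R y \<in> perp U"
  by (rule subspace_scale[OF subspace_perp])

lemma perp_zero: "0 \<in> perp U"
  by (rule subspace_0[OF subspace_perp])

lemma nearest_exists_X:
  fixes S :: "'a::{real_inner,complete_space} set"
  assumes S: "closed_subspace S"
  shows "\<exists>p\<in>S. \<forall>q\<in>S. norm (x - p) \<le> norm (x - q)"
proof -
  have sub: "subspace S" and cl: "closed S" using S by (auto simp: closed_subspace_def)
  define e where "e s = (\<lambda>i::nat. if i = 1 then s else (0::'a))" for s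
  define S1 where "S1 = e ` S"
  have tn: "tnorm 1 (tdiff (e x) (e s)) = norm (x - s)" for s
    by (simp add: tnorm_def tinner_def tdiff_def e_def norm_eq_sqrt_inner)
  have "\<exists>p\<in>S1. \<forall>q\<in>S1. tnorm 1 (tdiff (e x) p) \<le> tnorm 1 (tdiff (e x) q)"
  proof (rule tnearest_exists)
    show "S1 \<subseteq> tup 1" by (auto simp: S1_def e_def tup_def)
    show "S1 \<noteq> {}" using subspace_0[OF sub] by (auto simp: S1_def)
    fix a b assume "a \<in> S1" "b \<in> S1"
    then obtain a0 b0 where "a0 \<in> S" "b0 \<in> S" "a = e a0" "b = e b0" by (auto simp: S1_def)
    moreover have "(1/2) *\<^sub>R (a0 + b0) \<in> S" using \<open>a0 \<in> S\<close> \<open>b0 \<in> S\<close>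
      by (intro subspace_scale[OF sub] subspace_add[OF sub])
    moreover have "(\<lambda>i. (1/2) *\<^sub>R (e a0 i + e b0 i)) = e ((1/2) *\<^sub>R (a0 + b0))"
      by (auto simp: e_def)
    ultimately show "(\<lambda>i. (1/2) *\<^sub>R (a i + b i)) \<in> S1" by (auto simp: S1_def)
  next
    show "tclosed 1 S1" unfolding tclosed_def
    proof (intro conjI allI impI)
      show "S1 \<subseteq> tup 1" by (auto simp: S1_def e_def tup_def)
      fix s z assume h: "(\<forall>m. s m \<in> S1) \<and> z \<in> tup 1 \<and> (\<lambda>m. tnorm 1 (tdiff (s m) z)) \<longlonglongrightarrow> 0"
      then have "(\<lambda>m. s m 1) \<longlonglongrightarrow> z 1" by (intro coord_tendsto[of 1 s z 1]) auto
      moreover have "s m 1 \<in> S" for m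
      proof -
        obtain a where "a \<in> S" "s m = e a" using h unfolding S1_def by blast
        then show ?thesis by (simp add: e_def)
      qed
      ultimately have z1: "z 1 \<in> S" using cl by (metis closed_sequentially)
      have "z = e (z 1)"
      proof
        fix i show "z i = e (z 1) i"
        proof (cases "i = 1")
          case False
          then have "i < 1 \<or> 1 < i" by auto
          then show ?thesis using h False unfolding tup_def e_def by auto
        qed (simp add: e_def)
      qed
      then show "z \<in> S1" using z1 by (auto simp: S1_def)
    qed
  qed
  then obtain p where "p \<in> S" "\<forall>q\<in>S. tnorm 1 (tdiff (e x) (e p)) \<le> tnorm 1 (tdiff (e x) (e q))"
    by (auto simp: S1_def)
  then show ?thesis unfolding tn by blast
qed

lemma proj_near:
  fixes S :: "'a::{real_inner,complete_space} set"
  assumes S: "closed_subspace S"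
  shows "proj S x \<in> S \<and> (\<forall>q\<in>S. norm (x - proj S x) \<le> norm (x - q))"
  unfolding proj_def using nearest_exists_X[OF S, of x] by (rule someI_ex[OF bexE]) blast+

lemma proj_char:
  fixes S :: "'a::{real_inner,complete_space} set"
  assumes S: "closed_subspace S"
  shows "proj S x \<in> S" "x - proj S x \<in> perp S"
proof -
  have sub: "subspace S" and cl: "closed S" using S by (auto simp: closed_subspace_def)
  have cv: "convex S" by (rule subspace_imp_convex[OF sub])
  let ?p = "proj S x"
  have pS: "?p \<in> S" and near: "\<forall>q\<in>S. dist x ?p \<le> dist x q" using proj_near[OF S, of x] by (auto simp: dist_norm)
  show "?p \<in> S" by (rule pS)
  show "x - ?p \<in> perp S" unfolding perp_iff
  proof
    fix c assume c: "c \<in> S"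
    have "inner (x - ?p) ((?p + c) - ?p) \<le> 0"
      by (rule any_closest_point_dot[OF cv cl pS _ near]) (rule subspace_add[OF sub pS c])
    moreover have "inner (x - ?p) ((?p - c) - ?p) \<le> 0"
      by (rule any_closest_point_dot[OF cv cl pS _ near]) (rule subspace_diff[OF sub pS c])
    ultimately show "inner c (x - ?p) = 0" by (simp add: inner_commute)
  qed
qed

lemma proj_unique:
  fixes S :: "'a::{real_inner,complete_space} set"
  assumes S: "closed_subspace S" and p: "p \<in> S" and o: "x - p \<in> perp S"
  shows "proj S x = p"
proof -
  have sub: "subspace S" and cl: "closed S" using S by (auto simp: closed_subspace_def)
  have cv: "convex S" by (rule subspace_imp_convex[OF sub])
  have near: "\<forall>q\<in>S. dist x p \<le> dist x q"
  proof
    fix q assume q: "q \<in> S"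
    have "p - q \<in> S" by (rule subspace_diff[OF sub p q])
    then have "orthogonal (x - p) (p - q)" using o by (auto simp: perp_iff orthogonal_def inner_commute)
    then have "(norm ((x - p) + (p - q)))^2 = (norm (x - p))^2 + (norm (p - q))^2"
      by (rule norm_add_Pythagorean)
    then have "(norm (x - p))^2 \<le> (norm (x - q))^2" by simp
    then show "dist x p \<le> dist x q" by (simp add: dist_norm power2_le_iff_abs_le)
  qed
  have "proj S x \<in> S" "\<forall>q\<in>S. dist x (proj S x) \<le> dist x q" using proj_near[OF S, of x] by (auto simp: dist_norm)
  then show ?thesis using any_closest_point_unique[OF cv cl p _ near] by metis
qed



definition Rset :: "nat \<Rightarrow> (nat \<Rightarrow> 'a::real_inner set) \<Rightarrow> (nat \<Rightarrow> 'a) set" where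
  "Rset n U = {w \<in> tup (n - 1). \<forall>i\<in>{1..n - 1}. w i - w (i - 1) \<in> perp (U i)}"

lemma seq_closed: "closed S \<Longrightarrow> (\<And>m. f m \<in> S) \<Longrightarrow> f \<longlonglongrightarrow> l \<Longrightarrow> l \<in> S"
  by (rule Lim_in_closed_set[of S "\<lambda>m. f m" sequentially l]) auto

lemma tup0: "w \<in> tup k \<Longrightarrow> w 0 = 0"
  by (simp add: tup_def)

lemma tup_out: "w \<in> tup k \<Longrightarrow> \<not> (1 \<le> i \<and> i \<le> k) \<Longrightarrow> w i = 0"
  by (auto simp: tup_def not_le)

lemma Psi_le: "j \<le> n - 1 \<Longrightarrow> Psi n y j = (\<Sum>i\<in>{1..j}. y i)"
  by (cases j) (auto simp: Psi_def)

lemma sum_last: "1 \<le> (i::nat) \<Longrightarrow> (\<Sum>j\<in>{1..i}. f j) = (\<Sum>j\<in>{1..i - 1}. f j) + (f i :: 'b::comm_monoid_add)"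
  by (cases i) (auto simp: sum.cl_ivl_Suc add.commute)

lemma telescope: "(\<Sum>j\<in>{1..i::nat}. f j - f (j - 1)) = f i - (f 0 :: 'b::ab_group_add)"
proof (induction i)
  case 0 then show ?case by simp
next
  case (Suc i) then show ?case by (simp add: sum.cl_ivl_Suc)
qed

lemma range_eq: "Psi n ` PsiDom n U = Rset n U"
proof
  show "Psi n ` PsiDom n U \<subseteq> Rset n U"
  proof
    fix w assume "w \<in> Psi n ` PsiDom n U"
    then obtain y where y: "y \<in> PsiDom n U" and w: "w = Psi n y" by blast
    have "w \<in> tup (n - 1)" unfolding w tup_def Psi_def by auto
    moreover have "w i - w (i - 1) \<in> perp (U i)" if i: "i \<in> {1..n - 1}" for i
    proof -
      have "w i = (\<Sum>j\<in>{1..i - 1}. y j) + y i" using i unfolding w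
        by (simp add: Psi_le sum_last del: One_nat_def)
      moreover have "w (i - 1) = (\<Sum>j\<in>{1..i - 1}. y j)" using i unfolding w
        by (intro Psi_le) auto
      ultimately have "w i - w (i - 1) = y i" by simp
      then show ?thesis using y i by (simp add: PsiDom_def)
    qed
    ultimately show "w \<in> Rset n U" by (simp add: Rset_def)
  qed
next
  show "Rset n U \<subseteq> Psi n ` PsiDom n U"
  proof
    fix w assume w: "w \<in> Rset n U"
    define y where "y i = (if 1 \<le> i \<and> i \<le> n - 1 then w i - w (i - 1) else 0)" for i
    have "y \<in> PsiDom n U" using w unfolding PsiDom_def tup_def y_def Rset_def by auto
    moreover have "Psi n y = w"
    proof
      fix i show "Psi n y i = w i"
      proof (cases "1 \<le> i \<and> i \<le> n - 1")
        case True
        then have "Psi n y i = (\<Sum>j\<in>{1..i}. w j - w (j - 1))"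
          by (simp add: Psi_def y_def)
        also have "\<dots> = w i - w 0" by (rule telescope)
        also have "\<dots> = w i" using w tup0[of w "n - 1"] by (simp add: Rset_def)
        finally show ?thesis .
      next
        case False
        have "w \<in> tup (n - 1)" using w by (simp add: Rset_def)
        then have "w i = 0" using False by (rule tup_out)
        then show ?thesis unfolding Psi_def if_not_P[OF False] by simp
      qed
    qed
    ultimately show "w \<in> Psi n ` PsiDom n U" by blast
  qed
qed

lemma Eset_eq: "Eset n U = {w \<in> Rset n U. w (n - 1) \<in> perp (U n)}"
  unfolding Eset_def range_eq ..

lemma tsub_R: "tsub (n - 1) (Rset n U)"
  unfolding tsub_def
proof (intro conjI ballI allI)
  show "Rset n U \<subseteq> tup (n - 1)" by (auto simp: Rset_def)
  show "(\<lambda>_. 0) \<in> Rset n U" by (auto simp: Rset_def tup_def perp_zero)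
  fix y y' a b assume y: "y \<in> Rset n U" and y': "y' \<in> Rset n U"
  show "(\<lambda>i. a *\<^sub>R y i + b *\<^sub>R y' i) \<in> Rset n U"
    unfolding Rset_def
  proof (intro CollectI conjI ballI)
    show "(\<lambda>i. a *\<^sub>R y i + b *\<^sub>R y' i) \<in> tup (n - 1)" using y y' by (auto simp: Rset_def tup_def)
    fix i assume i: "i \<in> {1..n - 1}"
    have "(a *\<^sub>R y i + b *\<^sub>R y' i) - (a *\<^sub>R y (i - 1) + b *\<^sub>R y' (i - 1)) = a *\<^sub>R (y i - y (i - 1)) + b *\<^sub>R (y' i - y' (i - 1))"
      by (simp add: algebra_simps)
    moreover have "a *\<^sub>R (y i - y (i - 1)) + b *\<^sub>R (y' i - y' (i - 1)) \<in> perp (U i)"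
      using y y' i by (intro perp_add perp_scale) (auto simp: Rset_def)
    ultimately show "(a *\<^sub>R y i + b *\<^sub>R y' i) - (a *\<^sub>R y (i - 1) + b *\<^sub>R y' (i - 1)) \<in> perp (U i)" by simp
  qed
qed

lemma tsub_E: "tsub (n - 1) (Eset n U)"
proof -
  have R: "tsub (n - 1) (Rset n U)" by (rule tsub_R)
  show ?thesis unfolding tsub_def
  proof (intro conjI ballI allI)
    show "Eset n U \<subseteq> tup (n - 1)" using R unfolding tsub_def Eset_eq by blast
    show "(\<lambda>_. 0) \<in> Eset n U" using R unfolding tsub_def Eset_eq by (simp add: perp_zero)
    fix y y' a b assume "y \<in> Eset n U" "y' \<in> Eset n U"
    then have "y \<in> Rset n U" "y' \<in> Rset n U" "y (n - 1) \<in> perp (U n)" "y' (n - 1) \<in> perp (U n)"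
      unfolding Eset_eq by auto
    then show "(\<lambda>i. a *\<^sub>R y i + b *\<^sub>R y' i) \<in> Eset n U"
      unfolding Eset_eq using tsub_lin[OF R] by (simp add: perp_add perp_scale)
  qed
qed

lemma coord_tendsto0:
  fixes s :: "nat \<Rightarrow> nat \<Rightarrow> 'a::real_inner"
  assumes "(\<lambda>m. tnorm k (tdiff (s m) z)) \<longlonglongrightarrow> 0" "i \<le> k" "\<And>m. s m \<in> tup k" "z \<in> tup k"
  shows "(\<lambda>m. s m i) \<longlonglongrightarrow> z i"
proof (cases "i = 0")
  case True
  have "s m 0 = 0" for m using assms(3) tup0 by blast
  then show ?thesis using True assms(4) by (simp add: tup0)
next
  case False then show ?thesis using assms by (intro coord_tendsto) auto
qed

lemma tclosed_R: "tclosed (n - 1) (Rset n U)"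
  unfolding tclosed_def
proof (intro conjI allI impI)
  show "Rset n U \<subseteq> tup (n - 1)" by (auto simp: Rset_def)
  fix s z assume h: "(\<forall>m. s m \<in> Rset n U) \<and> z \<in> tup (n - 1) \<and> (\<lambda>m. tnorm (n - 1) (tdiff (s m) z)) \<longlonglongrightarrow> 0"
  have st: "s m \<in> tup (n - 1)" for m using h by (auto simp: Rset_def)
  have "z i - z (i - 1) \<in> perp (U i)" if i: "i \<in> {1..n - 1}" for i
  proof -
    have "s m i - s m (i - 1) \<in> perp (U i)" for m using h i by (auto simp: Rset_def)
    moreover have "(\<lambda>m. s m i - s m (i - 1)) \<longlonglongrightarrow> z i - z (i - 1)"
      using i h st by (intro tendsto_diff coord_tendsto0[of "n - 1" s z]) auto
    ultimately show ?thesis by (rule seq_closed[OF closed_perp])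
  qed
  then show "z \<in> Rset n U" using h by (simp add: Rset_def)
qed

lemma tclosed_E: "tclosed (n - 1) (Eset n U)"
  unfolding tclosed_def
proof (intro conjI allI impI)
  show "Eset n U \<subseteq> tup (n - 1)" by (auto simp: Eset_eq Rset_def)
  fix s z assume h: "(\<forall>m. s m \<in> Eset n U) \<and> z \<in> tup (n - 1) \<and> (\<lambda>m. tnorm (n - 1) (tdiff (s m) z)) \<longlonglongrightarrow> 0"
  have sR: "\<forall>m. s m \<in> Rset n U" using h by (auto simp: Eset_eq)
  have "z \<in> Rset n U" using tclosed_R[of n U] sR h unfolding tclosed_def by blast
  moreover have "z (n - 1) \<in> perp (U n)"
  proof -
    have st: "s m \<in> tup (n - 1)" for m using h by (auto simp: Eset_eq Rset_def)
    have "s m (n - 1) \<in> perp (U n)" for m using h by (auto simp: Eset_eq)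
    moreover have "(\<lambda>m. s m (n - 1)) \<longlonglongrightarrow> z (n - 1)" using h st by (intro coord_tendsto0[of "n - 1" s z]) auto
    ultimately show ?thesis by (rule seq_closed[OF closed_perp])
  qed
  ultimately show "z \<in> Eset n U" by (simp add: Eset_eq)
qed



lemma mx_in:
  fixes U :: "nat \<Rightarrow> 'a::{real_inner,complete_space} set"
  assumes U: "\<forall>i\<in>{1..n}. closed_subspace (U i)" and i: "1 \<le> i" "i \<le> n"
  shows "mx (\<lambda>j. proj (U j)) z i \<in> U i"
proof (cases i)
  case 0 then show ?thesis using i by simp
next
  case (Suc j)
  show ?thesis
  proof (cases j)
    case 0
    have "closed_subspace (U 1)" using U i by auto
    then show ?thesis using Suc 0 by (simp add: proj_char(1))
  next
    case (Suc j')
    have "closed_subspace (U (j' + 2))" using U i \<open>i = Suc j\<close> Suc by auto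
    then show ?thesis using \<open>i = Suc j\<close> Suc by (simp add: proj_char(1))
  qed
qed

lemma mx_step:
  assumes "2 \<le> i"
  shows "mx P z i = P i (mx P z (i - 1) + z i - z (i - 1))"
proof -
  obtain j where j: "i = Suc (Suc j)" using assms by (metis add_2_eq_Suc le_Suc_ex)
  show ?thesis unfolding j by (simp add: numeral_2_eq_2)
qed

lemma mx_one: "mx P z 1 = P 1 (z 1)"
  by simp

lemma Mop_lo: "1 \<le> i \<Longrightarrow> i \<le> n - 1 \<Longrightarrow> Mop n U z i = mx (\<lambda>j. proj (U j)) z i"
  by (simp add: Mop_def)

lemma Mop_n: assumes "n \<ge> 3" shows "Mop n U z n = proj (U n) (mx (\<lambda>j. proj (U j)) z 1 + mx (\<lambda>j. proj (U j)) z (n - 1) - z (n - 1))"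
proof -
  have c: "\<not> (1 \<le> n \<and> n \<le> n - 1)" using assms by arith
  show ?thesis unfolding Mop_def if_not_P[OF c] by (simp only: if_True simp_thms)
qed

lemma fix_iff:
  assumes z: "z \<in> tup (n - 1)"
  shows "Top n U z = z \<longleftrightarrow> (\<forall>i\<in>{1..n - 1}. Mop n U z (i + 1) = Mop n U z i)"
proof
  assume h: "Top n U z = z"
  show "\<forall>i\<in>{1..n - 1}. Mop n U z (i + 1) = Mop n U z i"
  proof
    fix i assume i: "i \<in> {1..n - 1}"
    have "Top n U z i = z i" using h by simp
    then show "Mop n U z (i + 1) = Mop n U z i" using i by (simp add: Top_def)
  qed
next
  assume h: "\<forall>i\<in>{1..n - 1}. Mop n U z (i + 1) = Mop n U z i"
  show "Top n U z = z"
  proof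
    fix i show "Top n U z i = z i"
    proof (cases "1 \<le> i \<and> i \<le> n - 1")
      case True then show ?thesis using h by (simp add: Top_def)
    next
      case False then show ?thesis using tup_out[OF z False] unfolding Top_def if_not_P[OF False] by simp
    qed
  qed
qed

definition dg :: "nat \<Rightarrow> 'a::zero \<Rightarrow> nat \<Rightarrow> 'a" where
  "dg k x = (\<lambda>i. if 1 \<le> i \<and> i \<le> k then x else 0)"

lemma diag_iff: "d \<in> diag k Z \<longleftrightarrow> (\<exists>x\<in>Z. d = dg k x)"
  by (simp add: diag_def dg_def)

lemma dg_tup: "dg k x \<in> tup k"
  by (auto simp: dg_def tup_def)

lemma orth_R:
  assumes x: "\<forall>j\<in>{1..n - 1}. x \<in> U j" and e: "e \<in> Rset n U"
  shows "i \<le> n - 1 \<Longrightarrow> inner x (e i) = 0"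
proof (induction i)
  case 0
  have "e \<in> tup (n - 1)" using e by (simp add: Rset_def)
  then have "e 0 = 0" by (rule tup0)
  then show ?case by simp
next
  case (Suc i)
  have "Suc i \<in> {1..n - 1}" using Suc.prems by auto
  then have "e (Suc i) - e (Suc i - 1) \<in> perp (U (Suc i))" using e unfolding Rset_def by blast
  then have "e (Suc i) - e i \<in> perp (U (Suc i))" by simp
  moreover have "x \<in> U (Suc i)" using x Suc.prems by auto
  ultimately have "inner x (e (Suc i) - e i) = 0" by (simp add: perp_def)
  then show ?case using Suc by (simp add: inner_diff_right)
qed

lemma tinner_dg_R:
  assumes x: "\<forall>j\<in>{1..n - 1}. x \<in> U j" and e: "e \<in> Rset n U"
  shows "tinner (n - 1) (dg (n - 1) x) e = 0"
  unfolding tinner_def dg_def using orth_R[OF x e] by (intro sum.neutral) auto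



lemma Fix_char:
  fixes U :: "nat \<Rightarrow> 'a::{real_inner,complete_space} set"
  assumes n: "n \<ge> 3" and U: "\<forall>i\<in>{1..n}. closed_subspace (U i)"
    and Z: "Z = (\<Inter>i\<in>{1..n}. U i)"
  shows "FixT n U = {(\<lambda>i. d i + e i) | d e. d \<in> diag (n - 1) Z \<and> e \<in> Eset n U}"
proof
  let ?P = "\<lambda>j. proj (U j)"
  have cs: "closed_subspace (U j)" if "j \<in> {1..n}" for j using U that by blast
  show "FixT n U \<subseteq> {(\<lambda>i. d i + e i) | d e. d \<in> diag (n - 1) Z \<and> e \<in> Eset n U}"
  proof
    fix z assume zF: "z \<in> FixT n U"
    then have zt: "z \<in> tup (n - 1)" and zT: "Top n U z = z" by (auto simp: FixT_def)
    have eqs: "\<And>i. i \<in> {1..n - 1} \<Longrightarrow> Mop n U z (i + 1) = Mop n U z i"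
      using fix_iff[OF zt] zT by blast
    define x where "x = mx ?P z 1"
    have allx: "1 \<le> i \<longrightarrow> i \<le> n - 1 \<longrightarrow> mx ?P z i = x" for i
    proof (induction i)
      case 0 then show ?case by simp
    next
      case (Suc i)
      show ?case
      proof (cases "i = 0")
        case True then show ?thesis by (simp add: x_def)
      next
        case False
        show ?thesis
        proof (intro impI)
          assume "Suc i \<le> n - 1"
          then have i1: "i \<in> {1..n - 1}" and i2: "Suc i \<le> n - 1" using False by auto
          have "mx ?P z (Suc i) = Mop n U z (i + 1)" using i2 by (simp add: Mop_lo)
          also have "\<dots> = Mop n U z i" by (rule eqs[OF i1])
          also have "\<dots> = mx ?P z i" using i1 by (simp add: Mop_lo)
          also have "\<dots> = x" using Suc.IH i1 by auto
          finally show "mx ?P z (Suc i) = x" .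
        qed
      qed
    qed
    have k1: "n - 1 \<in> {1..n - 1}" using n by auto
    have xn: "Mop n U z n = x"
    proof -
      have "Mop n U z n = Mop n U z (n - 1 + 1)" using n by simp
      also have "\<dots> = Mop n U z (n - 1)" by (rule eqs[OF k1])
      also have "\<dots> = x" using allx[of "n - 1"] k1 by (simp add: Mop_lo)
      finally show ?thesis .
    qed
    have xU: "x \<in> U j" if j: "j \<in> {1..n}" for j
    proof (cases "j \<le> n - 1")
      case True
      then have "mx ?P z j \<in> U j" using j U by (intro mx_in) auto
      then show ?thesis using allx[of j] True j by auto
    next
      case False
      then have "j = n" using j by auto
      have "Mop n U z n \<in> U n" unfolding Mop_n[OF n] using cs[of n] n by (simp add: proj_char(1))
      then show ?thesis using xn \<open>j = n\<close> by simp
    qed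
    then have xZ: "x \<in> Z" unfolding Z by blast
    define e where "e i = z i - dg (n - 1) x i" for i
    have et: "e \<in> tup (n - 1)" using zt dg_tup[of "n - 1" x] unfolding e_def tup_def by auto
    have z0: "z 0 = 0" using zt by (rule tup0)
    have eR: "e i - e (i - 1) \<in> perp (U i)" if i: "i \<in> {1..n - 1}" for i
    proof (cases "i = 1")
      case True
      have "x = proj (U 1) (z 1)" by (simp add: x_def)
      then have "z 1 - x \<in> perp (U 1)" using proj_char(2)[OF cs[of 1]] n by simp
      moreover have c: "1 \<le> n - 1" using n by arith
      ultimately show ?thesis using True z0 by (simp add: e_def dg_def)
    next
      case False
      then have i2: "2 \<le> i" using i by auto
      have "x = mx ?P z i" using allx[of i] i by auto
      also have "\<dots> = proj (U i) (mx ?P z (i - 1) + z i - z (i - 1))" by (rule mx_step[OF i2])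
      also have "mx ?P z (i - 1) = x" using allx[of "i - 1"] i i2 by auto
      finally have "x = proj (U i) (x + z i - z (i - 1))" .
      then have "(x + z i - z (i - 1)) - x \<in> perp (U i)" using proj_char(2)[OF cs[of i]] i by (metis atLeastAtMost_iff diff_le_self le_trans)
      moreover have c: "1 \<le> i - 1" "i - 1 \<le> n - 1" "1 \<le> i" "i \<le> n - 1" using i i2 by auto
      then have "dg (n - 1) x (i - 1) = x" "dg (n - 1) x i = x" unfolding dg_def by auto
      then have "e i - e (i - 1) = (x + z i - z (i - 1)) - x" by (simp add: e_def)
      ultimately show ?thesis by simp
    qed
    have ek: "e (n - 1) \<in> perp (U n)"
    proof -
      have h: "x = proj (U n) (x + x - z (n - 1))"
        using xn allx[of "n - 1"] k1 unfolding Mop_n[OF n] by (simp add: x_def)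
      have "(x + x - z (n - 1)) - proj (U n) (x + x - z (n - 1)) \<in> perp (U n)"
        using proj_char(2)[OF cs[of n]] n by auto
      then have "(x + x - z (n - 1)) - x \<in> perp (U n)" by (simp only: h[symmetric])
      then have "- ((x + x - z (n - 1)) - x) \<in> perp (U n)" by (rule perp_neg)
      moreover have "e (n - 1) = - ((x + x - z (n - 1)) - x)" using k1 by (simp add: e_def dg_def)
      ultimately show ?thesis by simp
    qed
    have eE: "e \<in> Eset n U" unfolding Eset_eq Rset_def using et eR ek by blast
    have "z = (\<lambda>i. dg (n - 1) x i + e i)" by (simp add: e_def)
    moreover have "dg (n - 1) x \<in> diag (n - 1) Z" using xZ by (auto simp: diag_iff)
    ultimately show "z \<in> {(\<lambda>i. d i + e i) | d e. d \<in> diag (n - 1) Z \<and> e \<in> Eset n U}"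
      using eE by blast
  qed
next
  let ?P = "\<lambda>j. proj (U j)"
  have cs: "closed_subspace (U j)" if "j \<in> {1..n}" for j using U that by blast
  show "{(\<lambda>i. d i + e i) | d e. d \<in> diag (n - 1) Z \<and> e \<in> Eset n U} \<subseteq> FixT n U"
  proof
    fix z assume "z \<in> {(\<lambda>i. d i + e i) | d e. d \<in> diag (n - 1) Z \<and> e \<in> Eset n U}"
    then obtain x e where xZ: "x \<in> Z" and eE: "e \<in> Eset n U" and zdef: "z = (\<lambda>i. dg (n - 1) x i + e i)"
      by (auto simp: diag_iff)
    have eR: "e \<in> Rset n U" and ek: "e (n - 1) \<in> perp (U n)" using eE by (auto simp: Eset_eq)
    have et: "e \<in> tup (n - 1)" using eR by (simp add: Rset_def)
    have ed: "e i - e (i - 1) \<in> perp (U i)" if "i \<in> {1..n - 1}" for i using eR that by (simp add: Rset_def)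
    have xU: "x \<in> U j" if "j \<in> {1..n}" for j using xZ that unfolding Z by blast
    have zt: "z \<in> tup (n - 1)" using et dg_tup[of "n - 1" x] unfolding zdef tup_def by auto
    have zi: "z i = x + e i" if "i \<in> {1..n - 1}" for i using that by (simp add: zdef dg_def)
    have e0: "e 0 = 0" using et by (rule tup0)
    have allx: "1 \<le> i \<longrightarrow> i \<le> n - 1 \<longrightarrow> mx ?P z i = x" for i
    proof (induction i)
      case 0 then show ?case by simp
    next
      case (Suc i)
      show ?case
      proof (intro impI)
        assume i2: "Suc i \<le> n - 1"
        show "mx ?P z (Suc i) = x"
        proof (cases "i = 0")
          case True
          have 1: "1 \<in> {1..n - 1}" using n by auto
          have "mx ?P z (Suc i) = proj (U 1) (x + e 1)" using True zi[OF 1] by simp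
          also have "\<dots> = x"
          proof (rule proj_unique[OF cs])
            show "1 \<in> {1..n}" using n by auto
            show "x \<in> U 1" using xU n by auto
            show "x + e 1 - x \<in> perp (U 1)" using ed[OF 1] e0 by simp
          qed
          finally show ?thesis .
        next
          case False
          have si: "Suc i \<in> {1..n - 1}" and ii: "i \<in> {1..n - 1}" using False i2 by auto
          have "mx ?P z (Suc i) = proj (U (Suc i)) (mx ?P z i + z (Suc i) - z i)"
            using mx_step[of "Suc i" ?P z] False by simp
          also have "\<dots> = proj (U (Suc i)) (x + (x + e (Suc i)) - (x + e i))"
            using Suc.IH ii zi[OF si] zi[OF ii] by auto
          also have "\<dots> = x"
          proof (rule proj_unique[OF cs])
            show "Suc i \<in> {1..n}" using si by auto
            show "x \<in> U (Suc i)" using xU si by auto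
            show "x + (x + e (Suc i)) - (x + e i) - x \<in> perp (U (Suc i))" using ed[OF si] by simp
          qed
          finally show ?thesis .
        qed
      qed
    qed
    have k1: "n - 1 \<in> {1..n - 1}" using n by auto
    have xn: "Mop n U z n = x"
    proof -
      have "Mop n U z n = proj (U n) (x + x - (x + e (n - 1)))"
        unfolding Mop_n[OF n] using allx[of 1] allx[of "n - 1"] k1 zi[OF k1] n by auto
      also have "\<dots> = x"
      proof (rule proj_unique[OF cs])
        show "n \<in> {1..n}" using n by auto
        show "x \<in> U n" using xU n by auto
        show "x + x - (x + e (n - 1)) - x \<in> perp (U n)" using perp_neg[OF ek] by simp
      qed
      finally show ?thesis .
    qed
    have Mx: "Mop n U z j = x" if "j \<in> {1..n}" for j
    proof (cases "j \<le> n - 1")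
      case True then show ?thesis using that allx[of j] by (simp add: Mop_lo)
    next
      case False then have "j = n" using that by auto
      then show ?thesis using xn by simp
    qed
    have "\<forall>i\<in>{1..n - 1}. Mop n U z (i + 1) = Mop n U z i"
    proof
      fix i assume "i \<in> {1..n - 1}"
      then have "i + 1 \<in> {1..n}" "i \<in> {1..n}" by auto
      then show "Mop n U z (i + 1) = Mop n U z i" using Mx by simp
    qed
    then have "Top n U z = z" using fix_iff[OF zt] by blast
    then show "z \<in> FixT n U" using zt by (simp add: FixT_def)
  qed
qed



lemma tinner_add_right: "tinner k a (\<lambda>i. b i + c i) = tinner k a b + tinner k a c"
  by (simp add: tinner_def inner_add_right sum.distrib)

lemma tinner_diff_left: "tinner k (\<lambda>i. a i - b i) c = tinner k a c - tinner k b c"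
  by (simp add: tinner_def inner_diff_left sum_subtractf)

lemma Psi_lin: "tlinear_on (n - 1) (PsiDom n U) (Psi n)"
  unfolding tlinear_on_def
proof (intro ballI allI conjI)
  fix y y' a b assume y: "y \<in> PsiDom n U" and y': "y' \<in> PsiDom n U"
  show "(\<lambda>i. a *\<^sub>R y i + b *\<^sub>R y' i) \<in> PsiDom n U"
    using y y' unfolding PsiDom_def tup_def by (auto intro!: perp_add perp_scale)
  show "Psi n (\<lambda>i. a *\<^sub>R y i + b *\<^sub>R y' i) = (\<lambda>i. a *\<^sub>R Psi n y i + b *\<^sub>R Psi n y' i)"
    by (rule ext) (simp add: Psi_def sum.distrib scaleR_sum_right)
qed

lemma Psi_tup: "Psi n ` PsiDom n U \<subseteq> tup (n - 1)"
  by (auto simp: Psi_def tup_def)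

lemma tnorm_bound:
  assumes c: "0 \<le> c" and b: "\<And>i. i \<in> {1..k} \<Longrightarrow> norm (z i) \<le> c"
  shows "tnorm k z \<le> real k * c"
proof -
  have "tinner k z z \<le> (\<Sum>i\<in>{1..k}. c^2)"
    unfolding tinner_self by (rule sum_mono) (use b in \<open>auto intro: power_mono\<close>)
  also have "\<dots> = real k * c^2" by simp
  also have "\<dots> \<le> (real k * c)^2"
  proof -
    have "real k \<le> real k ^ 2" by (cases k) (auto simp: power2_eq_square)
    then show ?thesis by (simp add: power_mult_distrib mult_right_mono)
  qed
  finally have "sqrt (tinner k z z) \<le> sqrt ((real k * c)^2)" by (rule real_sqrt_le_mono)
  then show ?thesis using c by (simp add: tnorm_def)
qed

lemma Psi_bound:
  "tnorm (n - 1) (tdiff (Psi n y') (Psi n y)) \<le> real (n - 1) * (real (n - 1) * tnorm (n - 1) (tdiff y' y))"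
proof (rule tnorm_bound)
  let ?k = "n - 1"
  let ?t = "tnorm ?k (tdiff y' y)"
  show "0 \<le> real ?k * ?t" by (simp add: tnorm_def tinner_self_ge0)
  fix i assume i: "i \<in> {1..?k}"
  have "tdiff (Psi n y') (Psi n y) i = (\<Sum>j\<in>{1..i}. y' j - y j)"
    using i by (simp add: tdiff_def Psi_def sum_subtractf)
  then have "norm (tdiff (Psi n y') (Psi n y) i) \<le> (\<Sum>j\<in>{1..i}. norm (y' j - y j))"
    by (simp add: norm_sum)
  also have "\<dots> \<le> (\<Sum>j\<in>{1..i}. ?t)"
  proof (rule sum_mono)
    fix j assume "j \<in> {1..i}"
    then have "j \<in> {1..?k}" using i by auto
    from norm_le_tnorm[OF this, of "tdiff y' y"] show "norm (y' j - y j) \<le> ?t" by (simp add: tdiff_def)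
  qed
  also have "\<dots> = real i * ?t" by simp
  also have "\<dots> \<le> real ?k * ?t"
    using i by (intro mult_right_mono) (auto simp: tnorm_def tinner_self_ge0)
  finally show "norm (tdiff (Psi n y') (Psi n y) i) \<le> real ?k * ?t" .
qed

lemma Psi_cont: "tcontinuous_on (n - 1) (PsiDom n U) (Psi n)"
  unfolding tcontinuous_on_def
proof (intro ballI allI impI)
  fix y and e :: real assume e: "e > 0"
  let ?K = "real (n - 1) * real (n - 1)"
  define d where "d = e / (?K + 1)"
  have K: "?K \<ge> 0" by simp
  have Kp: "?K + 1 > 0" using K by linarith
  then have d: "d > 0" unfolding d_def using e by (intro divide_pos_pos) auto
  show "\<exists>d>0. \<forall>y'\<in>PsiDom n U. tnorm (n - 1) (tdiff y' y) < d \<longrightarrow> tnorm (n - 1) (tdiff (Psi n y') (Psi n y)) < e"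
  proof (intro exI conjI ballI impI)
    show "d > 0" by (rule d)
    fix y' assume t: "tnorm (n - 1) (tdiff y' y) < d"
    let ?t = "tnorm (n - 1) (tdiff y' y)"
    have t0: "?t \<ge> 0" by (simp add: tnorm_def tinner_self_ge0)
    have "tnorm (n - 1) (tdiff (Psi n y') (Psi n y)) \<le> ?K * ?t"
      using Psi_bound[of n y' y] by (simp add: mult.assoc)
    also have "\<dots> \<le> (?K + 1) * ?t" using t0 by (simp add: distrib_right)
    also have "\<dots> < (?K + 1) * d" using t Kp by (rule mult_strict_left_mono)
    also have "\<dots> = e" using Kp unfolding d_def by simp
    finally show "tnorm (n - 1) (tdiff (Psi n y') (Psi n y)) < e" .
  qed
qed

lemma Psi_closed: "tclosed (n - 1) (Psi n ` PsiDom n U)"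
  unfolding range_eq by (rule tclosed_R)

lemma E_sub: "Eset n U \<subseteq> {w \<in> tup (n - 1). (\<forall>i\<in>{1..n - 1}. w i \<in> perpsum U i) \<and> w (n - 1) \<in> perp (U n)}"
proof
  fix w assume w: "w \<in> Eset n U"
  then obtain y where y: "y \<in> PsiDom n U" and wy: "w = Psi n y" and wk: "w (n - 1) \<in> perp (U n)"
    by (auto simp: Eset_def)
  have "w \<in> tup (n - 1)" using Psi_tup y wy by blast
  moreover have "w i \<in> perpsum U i" if i: "i \<in> {1..n - 1}" for i
  proof -
    have "w i = (\<Sum>j\<in>{1..i}. y j)" using i wy by (simp add: Psi_def)
    moreover have "\<forall>j\<in>{1..i}. y j \<in> perp (U j)" using y i by (auto simp: PsiDom_def)
    ultimately show ?thesis unfolding perpsum_def by blast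
  qed
  ultimately show "w \<in> {w \<in> tup (n - 1). (\<forall>i\<in>{1..n - 1}. w i \<in> perpsum U i) \<and> w (n - 1) \<in> perp (U n)}"
    using wk by blast
qed



lemma proj_part:
  fixes U :: "nat \<Rightarrow> 'a::{real_inner,complete_space} set"
  assumes n: "n \<ge> 3" and U: "\<forall>i\<in>{1..n}. closed_subspace (U i)"
    and Z: "Z = (\<Inter>i\<in>{1..n}. U i)"
    and z: "z \<in> tup (n - 1)"
    and zb: "zbar = (1 / real (n - 1)) *\<^sub>R (\<Sum>i\<in>{1..n - 1}. z i)"
  shows "tproj (n - 1) (FixT n U) z
           = (\<lambda>i. (if 1 \<le> i \<and> i \<le> n - 1 then proj Z zbar else 0) + tproj (n - 1) (Eset n U) z i)
         \<and> proj (U 1) (tproj (n - 1) (FixT n U) z 1) = proj Z zbar"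
proof -
  let ?k = "n - 1"
  have cs: "closed_subspace (U j)" if "j \<in> {1..n}" for j using U that by blast
  have Zcs: "closed_subspace Z"
    unfolding closed_subspace_def Z
  proof
    show "subspace (\<Inter>i\<in>{1..n}. U i)"
      by (rule subspace_Inter) (use U in \<open>auto simp: closed_subspace_def\<close>)
    show "closed (\<Inter>i\<in>{1..n}. U i)"
      by (rule closed_INT) (use U in \<open>auto simp: closed_subspace_def\<close>)
  qed
  have subZ: "subspace Z" using Zcs by (simp add: closed_subspace_def)
  have ZU: "x \<in> U j" if "x \<in> Z" "j \<in> {1..n}" for x j using that unfolding Z by blast
  define pz where "pz = proj Z zbar"
  have pzZ: "pz \<in> Z" and pzo: "zbar - pz \<in> perp Z" unfolding pz_def by (rule proj_char[OF Zcs])+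
  define eE where "eE = tproj ?k (Eset n U) z"
  have eEE: "eE \<in> Eset n U" and eEo: "\<forall>c\<in>Eset n U. tinner ?k (tdiff z eE) c = 0"
    using tproj_char[OF tsub_E tclosed_E, of n U z] unfolding eE_def by auto
  have FC: "FixT n U = {(\<lambda>i. d i + e i) | d e. d \<in> diag ?k Z \<and> e \<in> Eset n U}"
    by (rule Fix_char[OF n U Z])
  have FC': "c \<in> FixT n U \<longleftrightarrow> (\<exists>x e. x \<in> Z \<and> e \<in> Eset n U \<and> c = (\<lambda>i. dg ?k x i + e i))" for c
    unfolding FC diag_iff by blast
  have ER: "e \<in> Rset n U" if "e \<in> Eset n U" for e using that by (simp add: Eset_eq)
  have ZUk: "\<forall>j\<in>{1..?k}. x \<in> U j" if "x \<in> Z" for x using ZU[OF that] by auto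
  have tsE: "tsub ?k (Eset n U)" by (rule tsub_E)
  have tsF: "tsub ?k (FixT n U)"
    unfolding tsub_def
  proof (intro conjI ballI allI)
    show "FixT n U \<subseteq> tup ?k" by (auto simp: FixT_def)
    have "(\<lambda>_. 0::'a) = (\<lambda>i. dg ?k (0::'a) i + (\<lambda>_. 0::'a) i)" by (simp add: dg_def)
    moreover have "(\<lambda>_. 0::'a) \<in> Eset n U" using tsE by (simp add: tsub_def)
    moreover have "(0::'a) \<in> Z" by (rule subspace_0[OF subZ])
    ultimately show "(\<lambda>_. 0) \<in> FixT n U" unfolding FC' by blast
    fix y y' a b assume "y \<in> FixT n U" "y' \<in> FixT n U"
    then obtain x e x' e' where h: "x \<in> Z" "e \<in> Eset n U" "y = (\<lambda>i. dg ?k x i + e i)"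
      "x' \<in> Z" "e' \<in> Eset n U" "y' = (\<lambda>i. dg ?k x' i + e' i)" unfolding FC' by blast
    have "(\<lambda>i. a *\<^sub>R y i + b *\<^sub>R y' i) = (\<lambda>i. dg ?k (a *\<^sub>R x + b *\<^sub>R x') i + (\<lambda>i. a *\<^sub>R e i + b *\<^sub>R e' i) i)"
      unfolding h by (auto simp: dg_def algebra_simps)
    moreover have "a *\<^sub>R x + b *\<^sub>R x' \<in> Z" using h subZ by (simp add: subspace_add subspace_scale)
    moreover have "(\<lambda>i. a *\<^sub>R e i + b *\<^sub>R e' i) \<in> Eset n U" using h tsub_lin[OF tsE] by blast
    ultimately show "(\<lambda>i. a *\<^sub>R y i + b *\<^sub>R y' i) \<in> FixT n U" unfolding FC' by blast
  qed
  define p where "p = (\<lambda>i. dg ?k pz i + eE i)"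
  have pF: "p \<in> FixT n U" unfolding FC' p_def using pzZ eEE by blast
  have k1: "real ?k \<noteq> 0" using n by simp
  have orth: "tinner ?k (tdiff z p) c = 0" if c: "c \<in> FixT n U" for c
  proof -
    obtain x' e' where h: "x' \<in> Z" "e' \<in> Eset n U" "c = (\<lambda>i. dg ?k x' i + e' i)" using c unfolding FC' by blast
    have tz: "tdiff z p = (\<lambda>i. tdiff z eE i - dg ?k pz i)" by (simp add: tdiff_def p_def algebra_simps)
    have A: "tinner ?k (tdiff z p) e' = 0"
    proof -
      have "tinner ?k (tdiff z p) e' = tinner ?k (tdiff z eE) e' - tinner ?k (dg ?k pz) e'"
        unfolding tz by (rule tinner_diff_left)
      also have "\<dots> = 0" using eEo h(2) tinner_dg_R[OF ZUk[OF pzZ] ER[OF h(2)]] by simp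
      finally show ?thesis .
    qed
    have B: "tinner ?k (tdiff z p) (dg ?k x') = 0"
    proof -
      have "tinner ?k (tdiff z p) (dg ?k x') = tinner ?k (tdiff z eE) (dg ?k x') - tinner ?k (dg ?k pz) (dg ?k x')"
        unfolding tz by (rule tinner_diff_left)
      also have "tinner ?k (tdiff z eE) (dg ?k x') = tinner ?k z (dg ?k x') - tinner ?k eE (dg ?k x')"
        unfolding tdiff_def by (rule tinner_diff_left)
      also have "tinner ?k eE (dg ?k x') = 0"
        using tinner_dg_R[OF ZUk[OF h(1)] ER[OF eEE]] by (simp add: tinner_commute)
      also have "tinner ?k z (dg ?k x') = inner (\<Sum>i\<in>{1..?k}. z i) x'"
        by (simp add: tinner_def dg_def inner_sum_left)
      also have "(\<Sum>i\<in>{1..?k}. z i) = real ?k *\<^sub>R zbar" using k1 by (simp add: zb)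
      also have "tinner ?k (dg ?k pz) (dg ?k x') = real ?k * inner pz x'"
        by (simp add: tinner_def dg_def)
      finally have "tinner ?k (tdiff z p) (dg ?k x') = real ?k * inner (zbar - pz) x'"
        by (simp add: inner_diff_left algebra_simps)
      also have "inner (zbar - pz) x' = 0" using pzo h(1) by (simp add: perp_def inner_commute)
      finally show ?thesis by simp
    qed
    show ?thesis unfolding h(3) tinner_add_right A B by simp
  qed
  have tp: "tproj ?k (FixT n U) z = p" by (rule tproj_unique[OF tsF pF]) (use orth in blast)
  have peq: "p = (\<lambda>i. (if 1 \<le> i \<and> i \<le> n - 1 then proj Z zbar else 0) + tproj (n - 1) (Eset n U) z i)"
    by (simp add: p_def dg_def pz_def eE_def)
  have "proj (U 1) (p 1) = pz"
  proof -
    have 1: "1 \<in> {1..?k}" using n by auto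
    have p1: "p 1 = pz + eE 1" using 1 by (simp add: p_def dg_def)
    have "eE \<in> tup ?k" using ER[OF eEE] by (simp add: Rset_def)
    then have e0: "eE 0 = 0" by (rule tup0)
    have "eE 1 - eE (1 - 1) \<in> perp (U 1)" using ER[OF eEE] 1 unfolding Rset_def by blast
    then have "eE 1 \<in> perp (U 1)" using e0 by simp
    moreover have "pz \<in> U 1" using ZU[OF pzZ] n by auto
    ultimately show ?thesis unfolding p1 using cs[of 1] n by (intro proj_unique) auto
  qed
  then show ?thesis using tp peq by (simp add: pz_def)
qed

theorem mainTheorem3:
  fixes U :: "nat \<Rightarrow> 'a::{real_inner, complete_space} set"
    and n :: nat
  assumes "n \<ge> 3"
    and "\<forall>i\<in>{1..n}. closed_subspace (U i)"
  defines "Z \<equiv> (\<Inter>i\<in>{1..n}. U i)"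
  shows "tlinear_on (n - 1) (PsiDom n U) (Psi n)
    \<and> Psi n ` PsiDom n U \<subseteq> tup (n - 1)
    \<and> tcontinuous_on (n - 1) (PsiDom n U) (Psi n)
    \<and> tclosed (n - 1) (Psi n ` PsiDom n U)
    \<and> FixT n U = {(\<lambda>i. d i + e i) | d e. d \<in> diag (n - 1) Z \<and> e \<in> Eset n U}
    \<and> (\<forall>d\<in>diag (n - 1) Z. \<forall>e\<in>Eset n U. tinner (n - 1) d e = 0)
    \<and> Eset n U \<subseteq> {w \<in> tup (n - 1). (\<forall>i\<in>{1..n - 1}. w i \<in> perpsum U i) \<and> w (n - 1) \<in> perp (U n)}
    \<and> (\<forall>z\<in>tup (n - 1).
         let zbar = (1 / real (n - 1)) *\<^sub>R (\<Sum>i\<in>{1..n - 1}. z i) in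
         tproj (n - 1) (FixT n U) z
           = (\<lambda>i. (if 1 \<le> i \<and> i \<le> n - 1 then proj Z zbar else 0) + tproj (n - 1) (Eset n U) z i)
         \<and> proj (U 1) (tproj (n - 1) (FixT n U) z 1) = proj Z zbar)"
proof -
  have orth: "\<forall>d\<in>diag (n - 1) Z. \<forall>e\<in>Eset n U. tinner (n - 1) d e = 0"
  proof (intro ballI)
    fix d e assume d: "d \<in> diag (n - 1) Z" and e: "e \<in> Eset n U"
    then obtain x where x: "x \<in> Z" "d = dg (n - 1) x" by (auto simp: diag_iff)
    have "\<forall>j\<in>{1..n - 1}. x \<in> U j" using x(1) unfolding Z_def by auto
    moreover have "e \<in> Rset n U" using e by (simp add: Eset_eq)
    ultimately show "tinner (n - 1) d e = 0" unfolding x(2) by (rule tinner_dg_R)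
  qed
  have proj: "\<forall>z\<in>tup (n - 1).
         let zbar = (1 / real (n - 1)) *\<^sub>R (\<Sum>i\<in>{1..n - 1}. z i) in
         tproj (n - 1) (FixT n U) z
           = (\<lambda>i. (if 1 \<le> i \<and> i \<le> n - 1 then proj Z zbar else 0) + tproj (n - 1) (Eset n U) z i)
         \<and> proj (U 1) (tproj (n - 1) (FixT n U) z 1) = proj Z zbar"
  proof (intro ballI)
    fix z :: "nat \<Rightarrow> 'a" assume z: "z \<in> tup (n - 1)"
    show "let zbar = (1 / real (n - 1)) *\<^sub>R (\<Sum>i\<in>{1..n - 1}. z i) in
         tproj (n - 1) (FixT n U) z
           = (\<lambda>i. (if 1 \<le> i \<and> i \<le> n - 1 then proj Z zbar else 0) + tproj (n - 1) (Eset n U) z i)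
         \<and> proj (U 1) (tproj (n - 1) (FixT n U) z 1) = proj Z zbar"
      unfolding Let_def by (rule proj_part[OF assms(1,2) meta_eq_to_obj_eq[OF Z_def] z refl])
  qed
  show ?thesis
  proof (intro conjI)
    show "tlinear_on (n - 1) (PsiDom n U) (Psi n)" by (rule Psi_lin)
    show "Psi n ` PsiDom n U \<subseteq> tup (n - 1)" by (rule Psi_tup)
    show "tcontinuous_on (n - 1) (PsiDom n U) (Psi n)" by (rule Psi_cont)
    show "tclosed (n - 1) (Psi n ` PsiDom n U)" by (rule Psi_closed)
    show "FixT n U = {(\<lambda>i. d i + e i) | d e. d \<in> diag (n - 1) Z \<and> e \<in> Eset n U}"
      by (rule Fix_char[OF assms(1,2) meta_eq_to_obj_eq[OF Z_def]])
    show "\<forall>d\<in>diag (n - 1) Z. \<forall>e\<in>Eset n U. tinner (n - 1) d e = 0" by (rule orth)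
    show "Eset n U \<subseteq> {w \<in> tup (n - 1). (\<forall>i\<in>{1..n - 1}. w i \<in> perpsum U i) \<and> w (n - 1) \<in> perp (U n)}"
      by (rule E_sub)
  qed (rule proj)
qed

end
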